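(* Let $X$ be a topological space and $K$, $L$ complete non-Archimedean valued fields (not necessarily containing a common subfield, e.g. $\mathbb Q_p$ and $\mathbb Q_l$). Then there exists a unique homeomorphism $\mathrm{BSC}_K(X)\cong\mathrm{BSC}_L(X)$ compatible with the evaluation maps from $X$. In particular, for an extension $K/k$ of complete valued fields, the map $\mathrm{BSC}_K(X)\to\mathrm{BSC}_k(X)$ induced by restriction along the inclusion $C_{bd}(X,k)\hookrightarrow C_{bd}(X,K)$ is a homeomorphism.
   Context: Complete valued fields are fields complete with respect to a non-Archimedean absolute value of rank one (possibly trivial). $C_{bd}(X,k)$ is the $k$-algebra of bounded continuous functions $X\to k$ with the supremum norm. $\mathrm{BSC}_k(X)$ is the Berkovich spectrum of $C_{bd}(X,k)$: bounded multiplicative seminorms on it extending $|\cdot|$ on $k$, with the weakest topology making all $x\mapsto|f|_x$ continuous; the evaluation map is $X\to\mathrm{BSC}_k(X)$, $x\mapsto(f\mapsto|f(x)|)$. *)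

theory Defs
  imports "HOL-Analysis.Analysis"
begin

definition nonarch_abs :: "('k::field \<Rightarrow> real) \<Rightarrow> bool" where
  "nonarch_abs v \<longleftrightarrow>
     (\<forall>x. 0 \<le> v x) \<and> (\<forall>x. v x = 0 \<longleftrightarrow> x = 0) \<and>
     (\<forall>x y. v (x * y) = v x * v y) \<and>
     (\<forall>x y. v (x + y) \<le> max (v x) (v y))"

definition abs_complete :: "('k::field \<Rightarrow> real) \<Rightarrow> bool" where
  "abs_complete v \<longleftrightarrow>
     (\<forall>u::nat \<Rightarrow> 'k. (\<forall>e>0. \<exists>N. \<forall>m\<ge>N. \<forall>n\<ge>N. v (u m - u n) < e) \<longrightarrow>
        (\<exists>l. \<forall>e>0. \<exists>N. \<forall>n\<ge>N. v (u n - l) < e))"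

definition complete_valued_field :: "('k::field \<Rightarrow> real) \<Rightarrow> bool" where
  "complete_valued_field v \<longleftrightarrow> nonarch_abs v \<and> abs_complete v"

text \<open>C_bd(X,k): bounded continuous functions topspace X -> k (k with the topology of v),
  represented as functions that are 0 outside topspace X.\<close>
definition Cbd :: "'a topology \<Rightarrow> ('k::field \<Rightarrow> real) \<Rightarrow> ('a \<Rightarrow> 'k) set" where
  "Cbd X v = {f. (\<forall>x. x \<notin> topspace X \<longrightarrow> f x = 0) \<and>
     (\<forall>x\<in>topspace X. \<forall>e>0. \<exists>U. openin X U \<and> x \<in> U \<and> (\<forall>y\<in>U. v (f y - f x) < e)) \<and>
     (\<exists>B. \<forall>x\<in>topspace X. v (f x) \<le> B)}"

definition const_fun :: "'a topology \<Rightarrow> 'k::field \<Rightarrow> 'a \<Rightarrow> 'k" where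
  "const_fun X c = (\<lambda>x. if x \<in> topspace X then c else 0)"

definition supnorm :: "'a topology \<Rightarrow> ('k::field \<Rightarrow> real) \<Rightarrow> ('a \<Rightarrow> 'k) \<Rightarrow> real" where
  "supnorm X v f = (if topspace X = {} then 0 else (SUP x\<in>topspace X. v (f x)))"

definition BSC :: "'a topology \<Rightarrow> ('k::field \<Rightarrow> real) \<Rightarrow> (('a \<Rightarrow> 'k) \<Rightarrow> real) set" where
  "BSC X v = {s. s \<in> extensional (Cbd X v) \<and>
     (\<forall>f\<in>Cbd X v. 0 \<le> s f) \<and>
     (\<forall>f\<in>Cbd X v. \<forall>g\<in>Cbd X v. s (\<lambda>x. f x + g x) \<le> s f + s g) \<and>
     (\<forall>f\<in>Cbd X v. \<forall>g\<in>Cbd X v. s (\<lambda>x. f x * g x) = s f * s g) \<and>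
     (\<forall>c. s (const_fun X c) = v c) \<and>
     (\<forall>f\<in>Cbd X v. s f \<le> supnorm X v f)}"

definition BSC_top :: "'a topology \<Rightarrow> ('k::field \<Rightarrow> real) \<Rightarrow> (('a \<Rightarrow> 'k) \<Rightarrow> real) topology" where
  "BSC_top X v = subtopology (product_topology (\<lambda>_. euclideanreal) (Cbd X v)) (BSC X v)"

definition eval_map :: "'a topology \<Rightarrow> ('k::field \<Rightarrow> real) \<Rightarrow> 'a \<Rightarrow> (('a \<Rightarrow> 'k) \<Rightarrow> real)" where
  "eval_map X v x = restrict (\<lambda>f. v (f x)) (Cbd X v)"

definition restr_map :: "'a topology \<Rightarrow> ('k::field \<Rightarrow> real) \<Rightarrow> ('k \<Rightarrow> 'K::field)
     \<Rightarrow> (('a \<Rightarrow> 'K) \<Rightarrow> real) \<Rightarrow> (('a \<Rightarrow> 'k) \<Rightarrow> real)" where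
  "restr_map X v \<iota> s = restrict (\<lambda>f. s (\<iota> \<circ> f)) (Cbd X v)"

end

theory Submission
  imports Defs
begin

lemma na_basic:
  assumes "nonarch_abs v"
  shows "v 0 = 0" "v 1 = 1" "\<And>x. v (-x) = v x" "\<And>a b. v (a - b) = v (b - a)"
    "\<And>x. 0 \<le> v x" "\<And>x y. v (x*y) = v x * v y" "\<And>x y. v (x+y) \<le> max (v x) (v y)"
proof -
  have nn: "\<And>x. 0 \<le> v x" and z: "\<And>x. v x = 0 \<longleftrightarrow> x = 0" and m: "\<And>x y. v (x*y) = v x * v y"
    and u: "\<And>x y. v (x+y) \<le> max (v x) (v y)" using assms unfolding nonarch_abs_def by auto
  show "v 0 = 0" using z by simp
  have "v 1 = v 1 * v 1" using m[of 1 1] by simp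
  moreover have "v 1 \<noteq> 0" using z by simp
  ultimately show v1: "v 1 = 1" by (metis mult_cancel_right1)
  have "v (-1) * v (-1) = 1" using m[of "-1" "-1"] v1 by simp
  hence vm1: "v (-1) = 1" using nn[of "-1"]
    by (metis abs_of_nonneg mult_cancel_right1 mult_eq_0_iff mult_nonneg_nonneg real_sqrt_abs2 real_sqrt_mult_self zero_neq_one)
  show neg: "\<And>x. v (-x) = v x" using m vm1 by (metis mult_minus1 mult_1)
  show "\<And>a b. v (a - b) = v (b - a)" by (metis neg minus_diff_eq)
  show "\<And>x. 0 \<le> v x" by (rule nn)
  show "\<And>x y. v (x*y) = v x * v y" by (rule m)
  show "\<And>x y. v (x+y) \<le> max (v x) (v y)" by (rule u)
qed

lemma na_zero_iff: "nonarch_abs v \<Longrightarrow> v x = 0 \<longleftrightarrow> x = 0"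
  unfolding nonarch_abs_def by auto


definition clopens :: "'a topology \<Rightarrow> 'a set set" where
  "clopens X = {C. closedin X C \<and> openin X C}"

definition ind :: "'a set \<Rightarrow> 'a \<Rightarrow> 'k::field" where
  "ind C = (\<lambda>x. if x \<in> C then 1 else 0)"

definition lev :: "'a topology \<Rightarrow> ('k::field \<Rightarrow> real) \<Rightarrow> ('a \<Rightarrow> 'k) \<Rightarrow> real \<Rightarrow> 'a set" where
  "lev X v f r = {x \<in> topspace X. r \<le> v (f x)}"

lemma CbdI:
  assumes "\<And>x. x \<notin> topspace X \<Longrightarrow> f x = 0"
    and "\<And>x e. x \<in> topspace X \<Longrightarrow> e > 0 \<Longrightarrow> \<exists>U. openin X U \<and> x \<in> U \<and> (\<forall>y\<in>U. v (f y - f x) < e)"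
    and "\<And>x. x \<in> topspace X \<Longrightarrow> v (f x) \<le> B"
  shows "f \<in> Cbd X v"
  using assms unfolding Cbd_def by blast

lemma CbdD:
  assumes "f \<in> Cbd X v"
  shows "\<And>x. x \<notin> topspace X \<Longrightarrow> f x = 0"
    and "\<And>x e. x \<in> topspace X \<Longrightarrow> e > 0 \<Longrightarrow> \<exists>U. openin X U \<and> x \<in> U \<and> (\<forall>y\<in>U. v (f y - f x) < e)"
    and "\<exists>B\<ge>0. \<forall>x\<in>topspace X. v (f x) \<le> B"
proof -
  show "\<And>x. x \<notin> topspace X \<Longrightarrow> f x = 0"
    and "\<And>x e. x \<in> topspace X \<Longrightarrow> e > 0 \<Longrightarrow> \<exists>U. openin X U \<and> x \<in> U \<and> (\<forall>y\<in>U. v (f y - f x) < e)"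
    using assms unfolding Cbd_def by blast+
  obtain B where "\<forall>x\<in>topspace X. v (f x) \<le> B" using assms unfolding Cbd_def by blast
  thus "\<exists>B\<ge>0. \<forall>x\<in>topspace X. v (f x) \<le> B"
    by (intro exI[of _ "max B 0"]) auto
qed

lemma const_Cbd:
  assumes "nonarch_abs v"
  shows "const_fun X c \<in> Cbd X v"
proof (rule CbdI[where B="v c"])
  fix x e :: real
  show "\<And>x. x \<notin> topspace X \<Longrightarrow> const_fun X c x = 0" by (simp add: const_fun_def)
next
  fix x and e :: real assume "x \<in> topspace X" "e > 0"
  thus "\<exists>U. openin X U \<and> x \<in> U \<and> (\<forall>y\<in>U. v (const_fun X c y - const_fun X c x) < e)"
    using na_basic[OF assms] by (intro exI[of _ "topspace X"]) (auto simp: const_fun_def)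
next
  fix x assume "x \<in> topspace X" thus "v (const_fun X c x) \<le> v c" by (simp add: const_fun_def)
qed

lemma clopens_sub: "C \<in> clopens X \<Longrightarrow> C \<subseteq> topspace X"
  by (simp add: clopens_def openin_subset)

lemma clopens_compl: "C \<in> clopens X \<Longrightarrow> topspace X - C \<in> clopens X"
  unfolding clopens_def by (auto simp: closedin_diff openin_diff)

lemma clopens_Int: "C \<in> clopens X \<Longrightarrow> D \<in> clopens X \<Longrightarrow> C \<inter> D \<in> clopens X"
  unfolding clopens_def by auto

lemma clopens_Un: "C \<in> clopens X \<Longrightarrow> D \<in> clopens X \<Longrightarrow> C \<union> D \<in> clopens X"
  unfolding clopens_def by auto

lemma clopens_top: "topspace X \<in> clopens X" and clopens_empty: "{} \<in> clopens X"
  unfolding clopens_def by auto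

lemma ind_Cbd:
  assumes "nonarch_abs v" "C \<in> clopens X"
  shows "(ind C :: 'a \<Rightarrow> 'k::field) \<in> Cbd X v"
proof (rule CbdI[where B=1])
  note b = na_basic[OF assms(1)]
  have sub: "C \<subseteq> topspace X" using clopens_sub[OF assms(2)] .
  show "\<And>x. x \<notin> topspace X \<Longrightarrow> (ind C :: 'a \<Rightarrow> 'k) x = 0" using sub by (auto simp: ind_def)
  fix x and e :: real assume x: "x \<in> topspace X" and e: "e > 0"
  show "\<exists>U. openin X U \<and> x \<in> U \<and> (\<forall>y\<in>U. v ((ind C :: 'a \<Rightarrow> 'k) y - ind C x) < e)"
  proof (cases "x \<in> C")
    case True thus ?thesis using assms(2) e b by (intro exI[of _ C]) (auto simp: ind_def clopens_def)
  next
    case False thus ?thesis using assms(2) e b x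
      by (intro exI[of _ "topspace X - C"]) (auto simp: ind_def clopens_def closedin_def)
  qed
next
  fix x show "v ((ind C :: 'a \<Rightarrow> 'k) x) \<le> 1" using na_basic[OF assms(1)] by (simp add: ind_def)
qed

lemma add_Cbd:
  assumes "nonarch_abs v" "f \<in> Cbd X v" "g \<in> Cbd X v"
  shows "(\<lambda>x. f x + g x) \<in> Cbd X v"
proof -
  note b = na_basic[OF assms(1)]
  obtain Bf where Bf: "\<forall>x\<in>topspace X. v (f x) \<le> Bf" using CbdD(3)[OF assms(2)] by blast
  obtain Bg where Bg: "\<forall>x\<in>topspace X. v (g x) \<le> Bg" using CbdD(3)[OF assms(3)] by blast
  show ?thesis
  proof (rule CbdI[where B="max Bf Bg"])
    show "\<And>x. x \<notin> topspace X \<Longrightarrow> f x + g x = 0" using CbdD(1)[OF assms(2)] CbdD(1)[OF assms(3)] by simp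
  next
    fix x and e :: real assume x: "x \<in> topspace X" and e: "e > 0"
    obtain U1 where U1: "openin X U1" "x \<in> U1" "\<forall>y\<in>U1. v (f y - f x) < e" using CbdD(2)[OF assms(2) x e] by blast
    obtain U2 where U2: "openin X U2" "x \<in> U2" "\<forall>y\<in>U2. v (g y - g x) < e" using CbdD(2)[OF assms(3) x e] by blast
    show "\<exists>U. openin X U \<and> x \<in> U \<and> (\<forall>y\<in>U. v (f y + g y - (f x + g x)) < e)"
    proof (intro exI[of _ "U1 \<inter> U2"] conjI ballI)
      fix y assume y: "y \<in> U1 \<inter> U2"
      have "f y + g y - (f x + g x) = (f y - f x) + (g y - g x)" by simp
      hence "v (f y + g y - (f x + g x)) \<le> max (v (f y - f x)) (v (g y - g x))" using b(7) by metis
      thus "v (f y + g y - (f x + g x)) < e" using U1 U2 y by (meson IntD1 IntD2 le_less_trans max_less_iff_conj)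
    qed (use U1 U2 in auto)
  next
    fix x assume "x \<in> topspace X"
    thus "v (f x + g x) \<le> max Bf Bg" using Bf Bg b(7)[of "f x" "g x"] by fastforce
  qed
qed

lemma mult_Cbd:
  assumes "nonarch_abs v" "f \<in> Cbd X v" "g \<in> Cbd X v"
  shows "(\<lambda>x. f x * g x) \<in> Cbd X v"
proof -
  note b = na_basic[OF assms(1)]
  obtain Bf where Bf: "Bf \<ge> 0" "\<forall>x\<in>topspace X. v (f x) \<le> Bf" using CbdD(3)[OF assms(2)] by blast
  obtain Bg where Bg: "Bg \<ge> 0" "\<forall>x\<in>topspace X. v (g x) \<le> Bg" using CbdD(3)[OF assms(3)] by blast
  show ?thesis
  proof (rule CbdI[where B="Bf * Bg"])
    show "\<And>x. x \<notin> topspace X \<Longrightarrow> f x * g x = 0" using CbdD(1)[OF assms(2)] by simp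
  next
    fix x and e :: real assume x: "x \<in> topspace X" and e: "e > 0"
    have e1: "e / (Bg + 1) > 0" "e / (Bf + 1) > 0" using e Bf Bg by auto
    obtain U1 where U1: "openin X U1" "x \<in> U1" "\<forall>y\<in>U1. v (f y - f x) < e / (Bg + 1)" using CbdD(2)[OF assms(2) x e1(1)] by blast
    obtain U2 where U2: "openin X U2" "x \<in> U2" "\<forall>y\<in>U2. v (g y - g x) < e / (Bf + 1)" using CbdD(2)[OF assms(3) x e1(2)] by blast
    show "\<exists>U. openin X U \<and> x \<in> U \<and> (\<forall>y\<in>U. v (f y * g y - f x * g x) < e)"
    proof (intro exI[of _ "U1 \<inter> U2"] conjI ballI)
      fix y assume y: "y \<in> U1 \<inter> U2"
      have yt: "y \<in> topspace X" using y U1(1) openin_subset by blast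
      have "f y * g y - f x * g x = f y * (g y - g x) + (f y - f x) * g x" by (simp add: algebra_simps)
      hence le: "v (f y * g y - f x * g x) \<le> max (v (f y) * v (g y - g x)) (v (f y - f x) * v (g x))"
        using b(7) b(6) by metis
      have "v (f y) * v (g y - g x) \<le> (Bf + 1) * v (g y - g x)"
        using Bf yt b(5) by (intro mult_right_mono) auto
      also have "\<dots> < (Bf + 1) * (e / (Bf + 1))" using U2 y Bf by (intro mult_strict_left_mono) auto
      also have "\<dots> = e" using Bf by simp
      finally have 1: "v (f y) * v (g y - g x) < e" .
      have "v (f y - f x) * v (g x) \<le> v (f y - f x) * (Bg + 1)"
        using Bg x b(5) by (intro mult_left_mono) auto
      also have "\<dots> < (e / (Bg + 1)) * (Bg + 1)" using U1 y Bg by (intro mult_strict_right_mono) auto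
      also have "\<dots> = e" using Bg by simp
      finally have 2: "v (f y - f x) * v (g x) < e" .
      show "v (f y * g y - f x * g x) < e" using le 1 2 by linarith
    qed (use U1 U2 in auto)
  next
    fix x assume "x \<in> topspace X"
    thus "v (f x * g x) \<le> Bf * Bg" using Bf Bg b(6) b(5) by (simp add: mult_mono)
  qed
qed

lemma lev_clopen:
  assumes "nonarch_abs v" "f \<in> Cbd X v" "r > 0"
  shows "lev X v f r \<in> clopens X"
proof -
  note b = na_basic[OF assms(1)]
  have op: "openin X (lev X v f r)"
  proof (subst openin_subopen, intro ballI)
    fix x assume x: "x \<in> lev X v f r"
    hence xt: "x \<in> topspace X" and rx: "r \<le> v (f x)" by (auto simp: lev_def)
    obtain U where U: "openin X U" "x \<in> U" "\<forall>y\<in>U. v (f y - f x) < r" using CbdD(2)[OF assms(2) xt assms(3)] by blast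
    have "U \<subseteq> lev X v f r"
    proof
      fix y assume y: "y \<in> U"
      have "f x = f y + (f x - f y)" by simp
      hence "v (f x) \<le> max (v (f y)) (v (f x - f y))" using b(7) by metis
      moreover have "v (f x - f y) < r" using U y b(4) by metis
      ultimately have "r \<le> v (f y)" using rx by linarith
      thus "y \<in> lev X v f r" using y U(1) openin_subset by (auto simp: lev_def)
    qed
    thus "\<exists>T. openin X T \<and> x \<in> T \<and> T \<subseteq> lev X v f r" using U by blast
  qed
  have cl: "openin X (topspace X - lev X v f r)"
  proof (subst openin_subopen, intro ballI)
    fix x assume x: "x \<in> topspace X - lev X v f r"
    hence xt: "x \<in> topspace X" and rx: "v (f x) < r" by (auto simp: lev_def)
    obtain U where U: "openin X U" "x \<in> U" "\<forall>y\<in>U. v (f y - f x) < r" using CbdD(2)[OF assms(2) xt assms(3)] by blast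
    have "U \<subseteq> topspace X - lev X v f r"
    proof
      fix y assume y: "y \<in> U"
      have "f y = f x + (f y - f x)" by simp
      hence "v (f y) \<le> max (v (f x)) (v (f y - f x))" using b(7) by metis
      hence "v (f y) < r" using rx U y by auto
      thus "y \<in> topspace X - lev X v f r" using y U(1) openin_subset by (auto simp: lev_def)
    qed
    thus "\<exists>T. openin X T \<and> x \<in> T \<and> T \<subseteq> topspace X - lev X v f r" using U by blast
  qed
  show ?thesis using op cl unfolding clopens_def closedin_def by (auto simp: lev_def)
qed


lemma na_inverse:
  assumes "nonarch_abs v" "a \<noteq> 0"
  shows "v (inverse a) = inverse (v a)"
proof -
  have "v a * v (inverse a) = 1" using na_basic(2,6)[OF assms(1)] assms(2) by (metis right_inverse)
  thus ?thesis by (metis inverse_unique)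
qed

definition invl :: "'a topology \<Rightarrow> ('k::field \<Rightarrow> real) \<Rightarrow> ('a \<Rightarrow> 'k) \<Rightarrow> real \<Rightarrow> 'a \<Rightarrow> 'k" where
  "invl X v f r = (\<lambda>x. if x \<in> lev X v f r then inverse (f x) else 0)"

lemma invl_props:
  assumes na: "nonarch_abs v" and f: "f \<in> Cbd X v" and r: "r > 0"
  shows "invl X v f r \<in> Cbd X v" "\<And>x. v (invl X v f r x) \<le> 1 / r"
    "(\<lambda>x. f x * invl X v f r x) = ind (lev X v f r)"
proof -
  note b = na_basic[OF na]
  have cl: "lev X v f r \<in> clopens X" by (rule lev_clopen[OF na f r])
  have nz: "\<And>x. x \<in> lev X v f r \<Longrightarrow> f x \<noteq> 0" using r b(1) by (auto simp: lev_def)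
  show bd: "\<And>x. v (invl X v f r x) \<le> 1 / r"
  proof -
    fix x show "v (invl X v f r x) \<le> 1 / r"
    proof (cases "x \<in> lev X v f r")
      case True
      hence "r \<le> v (f x)" by (simp add: lev_def)
      hence "inverse (v (f x)) \<le> 1 / r" using r by (simp add: inverse_eq_divide frac_le)
      thus ?thesis using True na_inverse[OF na nz[OF True]] by (simp add: invl_def)
    qed (use r b in \<open>simp add: invl_def\<close>)
  qed
  show "(\<lambda>x. f x * invl X v f r x) = ind (lev X v f r)"
    using nz by (auto simp: invl_def ind_def)
  show "invl X v f r \<in> Cbd X v"
  proof (rule CbdI[where B="1/r"])
    show "\<And>x. x \<notin> topspace X \<Longrightarrow> invl X v f r x = 0" by (simp add: invl_def lev_def)
    show "\<And>x. x \<in> topspace X \<Longrightarrow> v (invl X v f r x) \<le> 1 / r" using bd .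
  next
    fix x and e :: real assume x: "x \<in> topspace X" and e: "e > 0"
    show "\<exists>U. openin X U \<and> x \<in> U \<and> (\<forall>y\<in>U. v (invl X v f r y - invl X v f r x) < e)"
    proof (cases "x \<in> lev X v f r")
      case False
      thus ?thesis using cl e x b
        by (intro exI[of _ "topspace X - lev X v f r"]) (auto simp: invl_def clopens_def closedin_def)
    next
      case True
      have er: "e * r * r > 0" using e r by simp
      obtain U where U: "openin X U" "x \<in> U" "\<forall>y\<in>U. v (f y - f x) < e * r * r" using CbdD(2)[OF f x er] by blast
      show ?thesis
      proof (intro exI[of _ "U \<inter> lev X v f r"] conjI ballI)
        show "openin X (U \<inter> lev X v f r)" using U cl by (auto simp: clopens_def)
        show "x \<in> U \<inter> lev X v f r" using U True by auto
        fix y assume y: "y \<in> U \<inter> lev X v f r"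
        have ry: "r \<le> v (f y)" and rx: "r \<le> v (f x)" using y True by (auto simp: lev_def)
        have "invl X v f r y - invl X v f r x = inverse (f y) - inverse (f x)" using y True by (simp add: invl_def)
        also have "\<dots> = - (inverse (f y) * (f y - f x) * inverse (f x))"
          using nz y True by (simp add: inverse_diff_inverse)
        finally have "v (invl X v f r y - invl X v f r x) = inverse (v (f y)) * v (f y - f x) * inverse (v (f x))"
          using b na_inverse[OF na nz] y True by simp
        also have "\<dots> \<le> (1/r) * v (f y - f x) * (1/r)"
          using ry rx r b(5) by (intro mult_mono) (auto simp: inverse_eq_divide frac_le)
        also have "\<dots> < (1/r) * (e * r * r) * (1/r)"
          using U y r by (intro mult_strict_right_mono mult_strict_left_mono) auto
        also have "\<dots> = e" using r by simp
        finally show "v (invl X v f r y - invl X v f r x) < e" .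
      qed
    qed
  qed
qed

definition Pchar :: "'a topology \<Rightarrow> ('k::field \<Rightarrow> real) \<Rightarrow> 'a set set \<Rightarrow> ('a \<Rightarrow> 'k) \<Rightarrow> real \<Rightarrow> bool" where
  "Pchar X v U f t \<longleftrightarrow> 0 \<le> t \<and> (\<forall>r>0. (lev X v f r \<in> U \<longrightarrow> r \<le> t) \<and> (lev X v f r \<notin> U \<longrightarrow> t \<le> r))"

lemma Pchar_unique:
  assumes "Pchar X v U f t1" "Pchar X v U f t2" shows "t1 = t2"
proof (rule ccontr)
  assume "t1 \<noteq> t2"
  then consider "t1 < t2" | "t2 < t1" by linarith
  thus False
  proof cases
    case 1
    define r where "r = (t1 + t2) / 2"
    have "r > 0" "t1 < r" "r < t2" using 1 assms unfolding r_def Pchar_def by auto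
    thus False using assms unfolding Pchar_def by (meson not_le)
  next
    case 2
    define r where "r = (t1 + t2) / 2"
    have "r > 0" "t2 < r" "r < t1" using 2 assms unfolding r_def Pchar_def by auto
    thus False using assms unfolding Pchar_def by (meson not_le)
  qed
qed

definition ultra :: "'a topology \<Rightarrow> 'a set set \<Rightarrow> bool" where
  "ultra X U \<longleftrightarrow> U \<subseteq> clopens X \<and> topspace X \<in> U \<and> {} \<notin> U \<and>
     (\<forall>C\<in>U. \<forall>D\<in>U. C \<inter> D \<in> U) \<and> (\<forall>C\<in>U. \<forall>D\<in>clopens X. C \<subseteq> D \<longrightarrow> D \<in> U) \<and>
     (\<forall>C\<in>clopens X. C \<in> U \<or> topspace X - C \<in> U)"

lemma ultraD:
  assumes "ultra X U"
  shows "U \<subseteq> clopens X" "topspace X \<in> U" "{} \<notin> U" "\<And>C D. C \<in> U \<Longrightarrow> D \<in> U \<Longrightarrow> C \<inter> D \<in> U"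
    "\<And>C D. C \<in> U \<Longrightarrow> D \<in> clopens X \<Longrightarrow> C \<subseteq> D \<Longrightarrow> D \<in> U"
    "\<And>C. C \<in> clopens X \<Longrightarrow> C \<notin> U \<Longrightarrow> topspace X - C \<in> U"
  using assms unfolding ultra_def by blast+

lemma ultra_Un:
  assumes u: "ultra X U" and C: "C \<in> clopens X" and D: "D \<in> clopens X" and CD: "C \<union> D \<in> U"
  shows "C \<in> U \<or> D \<in> U"
proof (rule ccontr)
  assume "\<not> (C \<in> U \<or> D \<in> U)"
  hence "topspace X - C \<in> U" "topspace X - D \<in> U" using ultraD(6)[OF u] C D by auto
  hence "(topspace X - C) \<inter> (topspace X - D) \<inter> (C \<union> D) \<in> U" using ultraD(4)[OF u] CD by blast
  moreover have "(topspace X - C) \<inter> (topspace X - D) \<inter> (C \<union> D) = {}" by blast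
  ultimately show False using ultraD(3)[OF u] by simp
qed

lemma ultra_ne: "ultra X U \<Longrightarrow> C \<in> U \<Longrightarrow> D \<in> U \<Longrightarrow> C \<inter> D \<noteq> {}"
  using ultraD(3,4) by metis

lemma Pchar_exists:
  assumes u: "ultra X U" and na: "nonarch_abs v" and f: "f \<in> Cbd X v"
  shows "\<exists>t. Pchar X v U f t"
proof -
  obtain B where B: "B \<ge> 0" "\<forall>x\<in>topspace X. v (f x) \<le> B" using CbdD(3)[OF f] by blast
  define S where "S = {r. r > 0 \<and> lev X v f r \<in> U} \<union> {0}"
  have bdd: "bdd_above S"
  proof (rule bdd_aboveI[of _ B])
    fix r assume "r \<in> S"
    then consider "r = 0" | "r > 0" "lev X v f r \<in> U" by (auto simp: S_def)
    thus "r \<le> B"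
    proof cases
      case 2
      hence "lev X v f r \<noteq> {}" using ultraD(3)[OF u] by auto
      then obtain x where "x \<in> topspace X" "r \<le> v (f x)" by (auto simp: lev_def)
      thus ?thesis using B by force
    qed (use B in auto)
  qed
  have "Pchar X v U f (Sup S)"
    unfolding Pchar_def
  proof (intro conjI allI impI)
    show "0 \<le> Sup S" using bdd by (intro cSup_upper) (auto simp: S_def)
    fix r :: real assume r: "r > 0"
    { assume "lev X v f r \<in> U" thus "r \<le> Sup S" using bdd r by (intro cSup_upper) (auto simp: S_def) }
    { assume nin: "lev X v f r \<notin> U"
      show "Sup S \<le> r"
      proof (rule cSup_least)
        show "S \<noteq> {}" by (auto simp: S_def)
        fix s assume "s \<in> S"
        then consider "s = 0" | "s > 0" "lev X v f s \<in> U" by (auto simp: S_def)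
        thus "s \<le> r"
        proof cases
          case 2
          show ?thesis
          proof (rule ccontr)
            assume "\<not> s \<le> r"
            hence "lev X v f s \<subseteq> lev X v f r" by (auto simp: lev_def)
            hence "lev X v f r \<in> U" using ultraD(5)[OF u 2(2) lev_clopen[OF na f r]] by blast
            thus False using nin by simp
          qed
        qed (use r in auto)
      qed }
  qed
  thus ?thesis by blast
qed

definition Psi :: "'a topology \<Rightarrow> ('k::field \<Rightarrow> real) \<Rightarrow> 'a set set \<Rightarrow> ('a \<Rightarrow> 'k) \<Rightarrow> real" where
  "Psi X v U = restrict (\<lambda>f. THE t. Pchar X v U f t) (Cbd X v)"

lemma Psi_eq: "f \<in> Cbd X v \<Longrightarrow> Pchar X v U f t \<Longrightarrow> Psi X v U f = t"
  unfolding Psi_def by (simp add: the_equality Pchar_unique)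

lemma Psi_P: "ultra X U \<Longrightarrow> nonarch_abs v \<Longrightarrow> f \<in> Cbd X v \<Longrightarrow> Pchar X v U f (Psi X v U f)"
  using Pchar_exists Psi_eq by metis

definition Phi :: "'a topology \<Rightarrow> (('a \<Rightarrow> 'k::field) \<Rightarrow> real) \<Rightarrow> 'a set set" where
  "Phi X s = {C \<in> clopens X. s (ind C) = 1}"


lemma supnorm_upper:
  assumes "f \<in> Cbd X v" "x \<in> topspace X"
  shows "v (f x) \<le> supnorm X v f"
proof -
  obtain B where "B \<ge> 0" "\<forall>x\<in>topspace X. v (f x) \<le> B" using CbdD(3)[OF assms(1)] by blast
  hence "bdd_above ((\<lambda>x. v (f x)) ` topspace X)" by (auto intro: bdd_aboveI2)
  thus ?thesis using assms(2) by (auto simp: supnorm_def intro: cSUP_upper)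
qed

lemma supnorm_le:
  assumes "topspace X \<noteq> {}" "\<And>x. x \<in> topspace X \<Longrightarrow> v (f x) \<le> c"
  shows "supnorm X v f \<le> c"
  using assms by (auto simp: supnorm_def intro: cSUP_least)

lemma BSC_D:
  assumes "s \<in> BSC X v"
  shows "s \<in> extensional (Cbd X v)" "\<And>f. f \<in> Cbd X v \<Longrightarrow> 0 \<le> s f"
    "\<And>f g. f \<in> Cbd X v \<Longrightarrow> g \<in> Cbd X v \<Longrightarrow> s (\<lambda>x. f x + g x) \<le> s f + s g"
    "\<And>f g. f \<in> Cbd X v \<Longrightarrow> g \<in> Cbd X v \<Longrightarrow> s (\<lambda>x. f x * g x) = s f * s g"
    "\<And>c. s (const_fun X c) = v c" "\<And>f. f \<in> Cbd X v \<Longrightarrow> s f \<le> supnorm X v f"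
  using assms unfolding BSC_def by blast+

lemma ind_mult: "(\<lambda>x. (ind C x :: 'k::field) * ind D x) = ind (C \<inter> D)"
  by (auto simp: ind_def)

lemma ind_top: "ind (topspace X) = (const_fun X 1 :: 'a \<Rightarrow> 'k::field)"
  by (auto simp: ind_def const_fun_def)

lemma ind_empty: "ind {} = (const_fun X 0 :: 'a \<Rightarrow> 'k::field)"
  by (auto simp: ind_def const_fun_def)

lemma ind_compl: "C \<subseteq> topspace X \<Longrightarrow> (\<lambda>x. (ind C x :: 'k::field) + ind (topspace X - C) x) = const_fun X 1"
  by (auto simp: ind_def const_fun_def fun_eq_iff)

lemma BSC_ne:
  assumes "s \<in> BSC X v" "nonarch_abs v" shows "topspace X \<noteq> {}"
proof
  assume "topspace X = {}"
  hence "const_fun X (0::'b) = const_fun X 1" by (simp add: const_fun_def)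
  hence "v 0 = v 1" using BSC_D(5)[OF assms(1)] by metis
  thus False using na_basic[OF assms(2)] by simp
qed

lemma BSC_ind01:
  assumes s: "s \<in> BSC X v" and na: "nonarch_abs v" and C: "C \<in> clopens X"
  shows "s (ind C) = 0 \<or> s (ind C) = 1"
proof -
  have i: "ind C \<in> Cbd X v" using ind_Cbd[OF na C] .
  have "s (ind C) = s (ind C) * s (ind C)"
    using BSC_D(4)[OF s i i] by (simp add: ind_mult)
  hence "s (ind C) * (s (ind C) - 1) = 0" by (simp add: algebra_simps)
  thus ?thesis by simp
qed

lemma Phi_ultra:
  assumes s: "s \<in> BSC X v" and na: "nonarch_abs v"
  shows "ultra X (Phi X s)"
  unfolding ultra_def
proof (intro conjI ballI impI)
  note b = na_basic[OF na]
  show "Phi X s \<subseteq> clopens X" by (auto simp: Phi_def)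
  show "topspace X \<in> Phi X s" using BSC_D(5)[OF s, of 1] b by (simp add: Phi_def ind_top clopens_top)
  show "{} \<notin> Phi X s" using BSC_D(5)[OF s, of 0] b by (simp add: Phi_def ind_empty[where X=X])
  fix C assume C: "C \<in> Phi X s"
  hence Cc: "C \<in> clopens X" and sC: "s (ind C) = 1" by (auto simp: Phi_def)
  { fix D assume D: "D \<in> Phi X s"
    hence Dc: "D \<in> clopens X" and sD: "s (ind D) = 1" by (auto simp: Phi_def)
    have "s (ind (C \<inter> D)) = 1" using BSC_D(4)[OF s ind_Cbd[OF na Cc] ind_Cbd[OF na Dc]] sC sD
      by (simp add: ind_mult)
    thus "C \<inter> D \<in> Phi X s" using clopens_Int[OF Cc Dc] by (simp add: Phi_def) }
  { fix D assume Dc: "D \<in> clopens X" and sub: "C \<subseteq> D"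
    have eq: "(\<lambda>x. ind C x * ind D x) = ind C" using sub by (auto simp: ind_def fun_eq_iff)
    have "s (ind C) = s (ind C) * s (ind D)" using BSC_D(4)[OF s ind_Cbd[OF na Cc] ind_Cbd[OF na Dc]] eq by metis
    hence "s (ind D) = 1" using sC by simp
    thus "D \<in> Phi X s" using Dc by (simp add: Phi_def) }
next
  note b = na_basic[OF na]
  fix C assume Cc: "C \<in> clopens X"
  have Cc': "topspace X - C \<in> clopens X" using clopens_compl[OF Cc] .
  have "1 \<le> s (ind C) + s (ind (topspace X - C))"
    using BSC_D(3)[OF s ind_Cbd[OF na Cc] ind_Cbd[OF na Cc']] BSC_D(5)[OF s, of 1] b
      ind_compl[OF clopens_sub[OF Cc]] by metis
  hence "s (ind C) = 1 \<or> s (ind (topspace X - C)) = 1"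
    using BSC_ind01[OF s na Cc] BSC_ind01[OF s na Cc'] by auto
  thus "C \<in> Phi X s \<or> topspace X - C \<in> Phi X s" using Cc Cc' by (auto simp: Phi_def)
qed

lemma BSC_Pchar:
  assumes s: "s \<in> BSC X v" and na: "nonarch_abs v" and f: "f \<in> Cbd X v"
  shows "Pchar X v (Phi X s) f (s f)"
  unfolding Pchar_def
proof (intro conjI allI impI)
  note b = na_basic[OF na]
  have ne: "topspace X \<noteq> {}" using BSC_ne[OF s na] .
  show "0 \<le> s f" using BSC_D(2)[OF s f] .
  fix r :: real assume r: "r > 0"
  have cl: "lev X v f r \<in> clopens X" using lev_clopen[OF na f r] .
  { assume "lev X v f r \<in> Phi X s"
    hence one: "s (ind (lev X v f r)) = 1" by (simp add: Phi_def)
    note I = invl_props[OF na f r]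
    have sn: "supnorm X v (invl X v f r) \<le> 1/r" by (rule supnorm_le[OF ne]) (rule I(2))
    have p1: "s f * s (invl X v f r) = 1" using BSC_D(4)[OF s f I(1)] I(3) one by simp
    have p2: "s (invl X v f r) \<le> 1 / r"
      using BSC_D(6)[OF s I(1)] sn by linarith
    have p3: "0 \<le> s f" using BSC_D(2)[OF s] f by auto
    have "s f * s (invl X v f r) \<le> s f * (1 / r)" using p2 p3 by (rule mult_left_mono)
    hence "1 \<le> s f * (1 / r)" using p1 by simp
    thus "r \<le> s f" using r by (simp add: field_simps) }
  { assume "lev X v f r \<notin> Phi X s"
    hence "s (ind (lev X v f r)) \<noteq> 1" using cl by (simp add: Phi_def)
    hence "topspace X - lev X v f r \<in> Phi X s" using Phi_ultra[OF s na] cl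
      unfolding ultra_def Phi_def by blast
    hence one: "s (ind (topspace X - lev X v f r)) = 1" by (simp add: Phi_def)
    define M where "M = topspace X - lev X v f r"
    have Mc: "M \<in> clopens X" using clopens_compl[OF cl] by (simp add: M_def)
    have h: "(\<lambda>x. f x * ind M x) \<in> Cbd X v" using mult_Cbd[OF na f ind_Cbd[OF na Mc]] .
    have "s (\<lambda>x. f x * ind M x) = s f" using BSC_D(4)[OF s f ind_Cbd[OF na Mc]] one by (simp add: M_def)
    moreover have "supnorm X v (\<lambda>x. f x * ind M x) \<le> r"
    proof (rule supnorm_le[OF ne])
      fix x assume x: "x \<in> topspace X"
      show "v (f x * ind M x) \<le> r"
        using x r b by (cases "x \<in> M") (auto simp: ind_def M_def lev_def)
    qed
    ultimately show "s f \<le> r" using BSC_D(6)[OF s h] by linarith }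
qed

lemma Psi_Phi:
  assumes s: "s \<in> BSC X v" and na: "nonarch_abs v"
  shows "Psi X v (Phi X s) = s"
proof (rule extensionalityI[of _ "Cbd X v"])
  show "Psi X v (Phi X s) \<in> extensional (Cbd X v)" by (simp add: Psi_def)
  show "s \<in> extensional (Cbd X v)" using BSC_D(1)[OF s] .
  fix f assume "f \<in> Cbd X v"
  thus "Psi X v (Phi X s) f = s f" using Psi_eq BSC_Pchar[OF s na] by metis
qed


lemma choose_up:
  fixes a b r :: real
  assumes "0 \<le> a" "0 \<le> b" "a * b < r"
  shows "\<exists>r1 r2. a < r1 \<and> b < r2 \<and> r1 * r2 < r"
proof -
  define d where "d = min 1 ((r - a*b) / (2 * (a + b + 1)))"
  have d0: "d > 0" using assms by (simp add: d_def)
  have d1: "d \<le> 1" by (simp add: d_def)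
  have d2: "d * (a + b + 1) \<le> (r - a*b) / 2"
  proof -
    have "d \<le> (r - a*b) / (2 * (a + b + 1))" by (simp add: d_def)
    hence "d * (a + b + 1) \<le> (r - a*b) / (2 * (a + b + 1)) * (a + b + 1)"
      using assms by (intro mult_right_mono) auto
    also have "\<dots> = (r - a*b) / 2" using assms by (simp add: field_simps)
    finally show ?thesis .
  qed
  have "(a + d) * (b + d) = a*b + d*(a+b) + d*d" by (simp add: algebra_simps)
  also have "\<dots> \<le> a*b + d*(a+b) + d" using d0 d1 by (simp add: mult_left_le)
  also have "\<dots> = a*b + d*(a+b+1)" by (simp add: algebra_simps)
  also have "\<dots> < r"
  proof -
    have "(r - a*b) / 2 < r - a*b" using assms(3) by simp
    thus ?thesis using d2 by linarith
  qed
  finally show ?thesis using d0 by (intro exI[of _ "a+d"] exI[of _ "b+d"]) auto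
qed

lemma choose_down:
  fixes a b r :: real
  assumes "0 < r" "r < a * b" "0 \<le> a" "0 \<le> b"
  shows "\<exists>r1 r2. 0 < r1 \<and> r1 < a \<and> 0 < r2 \<and> r2 < b \<and> r < r1 * r2"
proof -
  have ab: "a * b > 0" using assms by linarith
  have a: "a > 0" using ab assms(3) by (metis mult_eq_0_iff order_le_less less_irrefl)
  have b: "b > 0" using ab assms(4) by (metis mult_eq_0_iff order_le_less less_irrefl)
  have "r / b < a" using assms b by (simp add: field_simps)
  have rb: "0 < r / b" using assms b by simp
  obtain r1 where r1ab: "r / b < r1" "r1 < a" using \<open>r/b < a\<close> dense by blast
  have r1: "r / b < r1" "r1 < a" "0 < r1" using r1ab rb by auto
  have "r / r1 < b" using r1 b assms by (simp add: field_simps)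
  have rr1: "0 < r / r1" using assms r1 by simp
  obtain r2 where r2ab: "r / r1 < r2" "r2 < b" using \<open>r / r1 < b\<close> dense by blast
  have r2: "r / r1 < r2" "r2 < b" "0 < r2" using r2ab rr1 by auto
  have "r < r1 * r2" using r2(1) r1(3) by (simp add: field_simps)
  thus ?thesis using r1 r2 by blast
qed

lemma ultra_ne_top: "ultra X U \<Longrightarrow> topspace X \<noteq> {}"
  using ultraD(2,3) by fastforce

lemma lev_sub_top: "lev X v f r \<subseteq> topspace X" by (auto simp: lev_def)

lemma Psi_BSC:
  assumes u: "ultra X U" and na: "nonarch_abs v"
  shows "Psi X v U \<in> BSC X v"
proof -
  note b = na_basic[OF na]
  note P = Psi_P[OF u na]
  have ne: "topspace X \<noteq> {}" using ultra_ne_top[OF u] .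
  have ext: "Psi X v U \<in> extensional (Cbd X v)" by (simp add: Psi_def)
  have nn: "\<And>f. f \<in> Cbd X v \<Longrightarrow> 0 \<le> Psi X v U f" using P unfolding Pchar_def by blast
  have low: "\<And>f r. f \<in> Cbd X v \<Longrightarrow> r > 0 \<Longrightarrow> lev X v f r \<in> U \<Longrightarrow> r \<le> Psi X v U f"
    using P unfolding Pchar_def by blast
  have up: "\<And>f r. f \<in> Cbd X v \<Longrightarrow> r > 0 \<Longrightarrow> lev X v f r \<notin> U \<Longrightarrow> Psi X v U f \<le> r"
    using P unfolding Pchar_def by blast
  have add: "Psi X v U (\<lambda>x. f x + g x) \<le> Psi X v U f + Psi X v U g"
    if f: "f \<in> Cbd X v" and g: "g \<in> Cbd X v" for f g
  proof -
    have fg: "(\<lambda>x. f x + g x) \<in> Cbd X v" using add_Cbd[OF na f g] .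
    have "Psi X v U (\<lambda>x. f x + g x) \<le> max (Psi X v U f) (Psi X v U g)"
    proof (rule ccontr)
      assume c: "\<not> ?thesis"
      define m where "m = max (Psi X v U f) (Psi X v U g)"
      define r where "r = (m + Psi X v U (\<lambda>x. f x + g x)) / 2"
      have m0: "0 \<le> m" using nn[OF f] by (simp add: m_def)
      have r: "r > 0" "m < r" "r < Psi X v U (\<lambda>x. f x + g x)" using c m0 by (auto simp: r_def m_def)
      have "lev X v (\<lambda>x. f x + g x) r \<in> U" using up[OF fg r(1)] r(3) by force
      moreover have "lev X v (\<lambda>x. f x + g x) r \<subseteq> lev X v f r \<union> lev X v g r"
      proof
        fix x assume x: "x \<in> lev X v (\<lambda>x. f x + g x) r"
        have "v (f x + g x) \<le> max (v (f x)) (v (g x))" by (rule b(7))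
        thus "x \<in> lev X v f r \<union> lev X v g r" using x by (auto simp: lev_def)
      qed
      ultimately have "lev X v f r \<union> lev X v g r \<in> U"
        using ultraD(5)[OF u] clopens_Un lev_clopen[OF na f r(1)] lev_clopen[OF na g r(1)] by blast
      hence "lev X v f r \<in> U \<or> lev X v g r \<in> U"
        using ultra_Un[OF u lev_clopen[OF na f r(1)] lev_clopen[OF na g r(1)]] by blast
      thus False using low[OF f r(1)] low[OF g r(1)] r(2) by (auto simp: m_def)
    qed
    also have "\<dots> \<le> Psi X v U f + Psi X v U g" using nn[OF f] nn[OF g] by simp
    finally show ?thesis .
  qed
  have mult: "Psi X v U (\<lambda>x. f x * g x) = Psi X v U f * Psi X v U g"
    if f: "f \<in> Cbd X v" and g: "g \<in> Cbd X v" for f g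
  proof -
    have fg: "(\<lambda>x. f x * g x) \<in> Cbd X v" using mult_Cbd[OF na f g] .
    define a where "a = Psi X v U f"
    define c where "c = Psi X v U g"
    have a0: "0 \<le> a" and c0: "0 \<le> c" using nn f g by (auto simp: a_def c_def)
    have "Pchar X v U (\<lambda>x. f x * g x) (a * c)"
      unfolding Pchar_def
    proof (intro conjI allI impI)
      show "0 \<le> a * c" using a0 c0 by simp
      fix r :: real assume r: "r > 0"
      { assume inU: "lev X v (\<lambda>x. f x * g x) r \<in> U"
        show "r \<le> a * c"
        proof (rule ccontr)
          assume "\<not> r \<le> a * c"
          then obtain r1 r2 where rr: "a < r1" "c < r2" "r1 * r2 < r" using choose_up[OF a0 c0] by force
          have r1: "r1 > 0" and r2: "r2 > 0" using rr a0 c0 by auto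
          have "lev X v f r1 \<notin> U" using low[OF f r1] rr(1) by (force simp: a_def)
          hence M1: "topspace X - lev X v f r1 \<in> U" using ultraD(6)[OF u lev_clopen[OF na f r1]] by blast
          have "lev X v g r2 \<notin> U" using low[OF g r2] rr(2) by (force simp: c_def)
          hence M2: "topspace X - lev X v g r2 \<in> U" using ultraD(6)[OF u lev_clopen[OF na g r2]] by blast
          have "(topspace X - lev X v f r1) \<inter> (topspace X - lev X v g r2) \<inter> lev X v (\<lambda>x. f x * g x) r \<in> U"
            using ultraD(4)[OF u] M1 M2 inU by blast
          moreover have "(topspace X - lev X v f r1) \<inter> (topspace X - lev X v g r2) \<inter> lev X v (\<lambda>x. f x * g x) r = {}"
          proof -
            { fix x assume x: "x \<in> topspace X" "v (f x) < r1" "v (g x) < r2" "r \<le> v (f x * g x)"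
              have "v (f x) * v (g x) \<le> v (f x) * r2" using x b(5) by (intro mult_left_mono) auto
              also have "\<dots> < r1 * r2" using x r2 by (intro mult_strict_right_mono) auto
              finally have False using x rr(3) b(6) by simp }
            thus ?thesis by (force simp: lev_def)
          qed
          ultimately show False using ultraD(3)[OF u] by simp
        qed }
      { assume ninU: "lev X v (\<lambda>x. f x * g x) r \<notin> U"
        show "a * c \<le> r"
        proof (rule ccontr)
          assume "\<not> a * c \<le> r"
          then obtain r1 r2 where rr: "0 < r1" "r1 < a" "0 < r2" "r2 < c" "r < r1 * r2"
            using choose_down[OF r _ a0 c0] by force
          have "lev X v f r1 \<in> U" using up[OF f rr(1)] rr(2) by (force simp: a_def)
          moreover have "lev X v g r2 \<in> U" using up[OF g rr(3)] rr(4) by (force simp: c_def)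
          ultimately have I: "lev X v f r1 \<inter> lev X v g r2 \<in> U" using ultraD(4)[OF u] by blast
          have "lev X v f r1 \<inter> lev X v g r2 \<subseteq> lev X v (\<lambda>x. f x * g x) r"
          proof
            fix x assume x: "x \<in> lev X v f r1 \<inter> lev X v g r2"
            hence "r1 * r2 \<le> v (f x) * v (g x)" using rr by (intro mult_mono) (auto simp: lev_def)
            thus "x \<in> lev X v (\<lambda>x. f x * g x) r" using x rr(5) b(6) by (auto simp: lev_def)
          qed
          hence "lev X v (\<lambda>x. f x * g x) r \<in> U" using ultraD(5)[OF u I lev_clopen[OF na fg r]] by blast
          thus False using ninU by simp
        qed }
    qed
    thus ?thesis using Psi_eq[OF fg] by (simp add: a_def c_def)
  qed
  have const: "Psi X v U (const_fun X c) = v c" for c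
  proof -
    have "Pchar X v U (const_fun X c) (v c)"
      unfolding Pchar_def
    proof (intro conjI allI impI)
      show "0 \<le> v c" using b by simp
      fix r :: real assume r: "r > 0"
      have L: "lev X v (const_fun X c) r = (if r \<le> v c then topspace X else {})"
        by (auto simp: lev_def const_fun_def)
      { assume "lev X v (const_fun X c) r \<in> U" thus "r \<le> v c" using L ultraD(3)[OF u] by (auto split: if_splits) }
      { assume "lev X v (const_fun X c) r \<notin> U" thus "v c \<le> r" using L ultraD(2)[OF u] by (auto split: if_splits) }
    qed
    thus ?thesis using Psi_eq[OF const_Cbd[OF na]] by blast
  qed
  have bnd: "Psi X v U f \<le> supnorm X v f" if f: "f \<in> Cbd X v" for f
  proof (rule ccontr)
    assume c: "\<not> ?thesis"
    obtain x0 where x0: "x0 \<in> topspace X" using ne by blast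
    have s0: "0 \<le> supnorm X v f" using supnorm_upper[OF f x0] b(5)[of "f x0"] by linarith
    define r where "r = (supnorm X v f + Psi X v U f) / 2"
    have r: "r > 0" "supnorm X v f < r" "r < Psi X v U f" using c s0 by (auto simp: r_def)
    have "lev X v f r \<in> U" using up[OF f r(1)] r(3) by force
    moreover have "lev X v f r = {}" using supnorm_upper[OF f] r(2) by (force simp: lev_def)
    ultimately show False using ultraD(3)[OF u] by simp
  qed
  show ?thesis unfolding BSC_def using ext nn add mult const bnd by blast
qed

lemma Phi_Psi:
  assumes u: "ultra X U" and na: "nonarch_abs v"
  shows "Phi X (Psi X v U) = U"
proof -
  note b = na_basic[OF na]
  have "Psi X v U (ind C) = (if C \<in> U then 1 else 0)" if C: "C \<in> clopens X" for C
  proof (rule Psi_eq[OF ind_Cbd[OF na C]])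
    show "Pchar X v U (ind C) (if C \<in> U then 1 else 0)"
      unfolding Pchar_def
    proof (intro conjI allI impI)
      fix r :: real assume r: "r > 0"
      have L: "lev X v (ind C) r = (if r \<le> 1 then C else {})"
        using clopens_sub[OF C] r b by (auto simp: lev_def ind_def)
      { assume "lev X v (ind C) r \<in> U" thus "r \<le> (if C \<in> U then 1 else 0)"
          using L ultraD(3)[OF u] by (auto split: if_splits) }
      { assume "lev X v (ind C) r \<notin> U" thus "(if C \<in> U then 1 else 0) \<le> r"
          using L r by (auto split: if_splits) }
    qed simp
  qed
  thus ?thesis using ultraD(1)[OF u] by (auto simp: Phi_def split: if_splits)
qed


lemma topspace_BSC_top: "topspace (BSC_top X v) = BSC X v"
  unfolding BSC_top_def by (auto simp: BSC_def PiE_def Pi_def)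

lemma proj_cont:
  assumes "f \<in> Cbd X v"
  shows "continuous_map (BSC_top X v) euclideanreal (\<lambda>s. s f)"
  unfolding BSC_top_def
  by (rule continuous_map_from_subtopology)
     (use continuous_map_product_projection[OF assms, of "\<lambda>_. euclideanreal"] in simp)

lemma Pchar_gt:
  assumes "Pchar X v U f t" "0 \<le> a"
  shows "a < t \<longleftrightarrow> (\<exists>r>0. a < r \<and> lev X v f r \<in> U)"
proof
  assume at: "a < t"
  define r where "r = (a + t) / 2"
  have "r > 0" "a < r" "r < t" using at assms(2) by (auto simp: r_def)
  thus "\<exists>r>0. a < r \<and> lev X v f r \<in> U" using assms(1) unfolding Pchar_def by (meson not_le)
next
  assume "\<exists>r>0. a < r \<and> lev X v f r \<in> U"
  thus "a < t" using assms(1) unfolding Pchar_def by force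
qed

lemma Pchar_lt:
  assumes "Pchar X v U f t"
  shows "t < a \<longleftrightarrow> (\<exists>r>0. r < a \<and> lev X v f r \<notin> U)"
proof
  assume at: "t < a"
  define r where "r = (a + t) / 2"
  have "r > 0" "r < a" "t < r" using at assms(1) by (auto simp: r_def Pchar_def)
  thus "\<exists>r>0. r < a \<and> lev X v f r \<notin> U" using assms(1) unfolding Pchar_def by (meson not_le)
next
  assume "\<exists>r>0. r < a \<and> lev X v f r \<notin> U"
  thus "t < a" using assms(1) unfolding Pchar_def by force
qed

definition H :: "'a topology \<Rightarrow> ('k1::field \<Rightarrow> real) \<Rightarrow> ('k2::field \<Rightarrow> real)
   \<Rightarrow> (('a \<Rightarrow> 'k1) \<Rightarrow> real) \<Rightarrow> (('a \<Rightarrow> 'k2) \<Rightarrow> real)" where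
  "H X v1 v2 s = Psi X v2 (Phi X s)"

lemma H_in: "s \<in> BSC X v1 \<Longrightarrow> nonarch_abs v1 \<Longrightarrow> nonarch_abs v2 \<Longrightarrow> H X v1 v2 s \<in> BSC X v2"
  unfolding H_def by (rule Psi_BSC[OF Phi_ultra])

lemma H_inv: "s \<in> BSC X v1 \<Longrightarrow> nonarch_abs v1 \<Longrightarrow> nonarch_abs v2 \<Longrightarrow> H X v2 v1 (H X v1 v2 s) = s"
  unfolding H_def using Phi_Psi[OF Phi_ultra] Psi_Phi by metis

lemma BSC_ind_iff:
  assumes s: "s \<in> BSC X v" and na: "nonarch_abs v" and C: "C \<in> clopens X"
  shows "C \<in> Phi X s \<longleftrightarrow> s (ind C) \<in> {1/2<..}"
  using BSC_ind01[OF s na C] C by (auto simp: Phi_def)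

lemma BSC_ind_iff2:
  assumes s: "s \<in> BSC X v" and na: "nonarch_abs v" and C: "C \<in> clopens X"
  shows "C \<notin> Phi X s \<longleftrightarrow> s (ind C) \<in> {..<1/2}"
  using BSC_ind01[OF s na C] C by (auto simp: Phi_def)

lemma H_cont:
  assumes na1: "nonarch_abs v1" and na2: "nonarch_abs v2"
  shows "continuous_map (BSC_top X v1) (BSC_top X v2) (H X v1 v2)"
proof -
  have comp: "continuous_map (BSC_top X v1) euclideanreal (\<lambda>s. H X v1 v2 s g)" if g: "g \<in> Cbd X v2" for g
  proof -
    have P: "Pchar X v2 (Phi X s) g (H X v1 v2 s g)" if "s \<in> BSC X v1" for s
      unfolding H_def using Psi_P[OF Phi_ultra[OF that na1] na2 g] .
    have clo: "lev X v2 g r \<in> clopens X" if "r > 0" for r using lev_clopen[OF na2 g that] .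
    have opn: "openin (BSC_top X v1) {s \<in> topspace (BSC_top X v1). s (ind (lev X v2 g r)) \<in> B}"
      if "r > 0" "open B" for r B
      by (rule openin_continuous_map_preimage[OF proj_cont[OF ind_Cbd[OF na1 clo[OF that(1)]]]])
         (use that in simp)
    have opn_gt: "openin (BSC_top X v1) {s \<in> topspace (BSC_top X v1). s (ind (lev X v2 g r)) \<in> {1/2<..}}"
      if "r > 0" for r using opn[OF that, of "{1/2<..}"] by (simp only: open_greaterThan simp_thms)
    have opn_lt: "openin (BSC_top X v1) {s \<in> topspace (BSC_top X v1). s (ind (lev X v2 g r)) \<in> {..<1/2}}"
      if "r > 0" for r using opn[OF that, of "{..<1/2}"] by (simp only: open_lessThan simp_thms)
    show ?thesis
      unfolding continuous_map_upper_lower_semicontinuous_lt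
    proof (intro allI conjI)
      fix a :: real
      show "openin (BSC_top X v1) {s \<in> topspace (BSC_top X v1). a < H X v1 v2 s g}"
      proof (cases "a < 0")
        case True
        have "{s \<in> topspace (BSC_top X v1). a < H X v1 v2 s g} = topspace (BSC_top X v1)"
          using P True unfolding topspace_BSC_top Pchar_def by force
        thus ?thesis by simp
      next
        case False
        have "{s \<in> topspace (BSC_top X v1). a < H X v1 v2 s g}
           = (\<Union>r\<in>{r. 0 < r \<and> a < r}. {s \<in> topspace (BSC_top X v1). s (ind (lev X v2 g r)) \<in> {1/2<..}})"
        proof -
          { fix s assume s: "s \<in> BSC X v1"
            have "a < H X v1 v2 s g \<longleftrightarrow> (\<exists>r>0. a < r \<and> lev X v2 g r \<in> Phi X s)"
              using Pchar_gt[OF P[OF s]] False by simp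
            also have "\<dots> \<longleftrightarrow> (\<exists>r>0. a < r \<and> s (ind (lev X v2 g r)) \<in> {1/2<..})"
              using BSC_ind_iff[OF s na1 clo] by blast
            finally have "a < H X v1 v2 s g \<longleftrightarrow> (\<exists>r>0. a < r \<and> s (ind (lev X v2 g r)) \<in> {1/2<..})" . }
          thus ?thesis unfolding topspace_BSC_top by blast
        qed
        moreover have "openin (BSC_top X v1) (\<Union>r\<in>{r. 0 < r \<and> a < r}. {s \<in> topspace (BSC_top X v1). s (ind (lev X v2 g r)) \<in> {1/2<..}})"
          using opn_gt by (intro openin_Union) blast
        ultimately show ?thesis by simp
      qed
    next
      fix a :: real
      have "{s \<in> topspace (BSC_top X v1). H X v1 v2 s g < a}
           = (\<Union>r\<in>{r. 0 < r \<and> r < a}. {s \<in> topspace (BSC_top X v1). s (ind (lev X v2 g r)) \<in> {..<1/2}})"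
      proof -
        { fix s assume s: "s \<in> BSC X v1"
          have "H X v1 v2 s g < a \<longleftrightarrow> (\<exists>r>0. r < a \<and> lev X v2 g r \<notin> Phi X s)"
            using Pchar_lt[OF P[OF s]] by simp
          also have "\<dots> \<longleftrightarrow> (\<exists>r>0. r < a \<and> s (ind (lev X v2 g r)) \<in> {..<1/2})"
            using BSC_ind_iff2[OF s na1 clo] by blast
          finally have "H X v1 v2 s g < a \<longleftrightarrow> (\<exists>r>0. r < a \<and> s (ind (lev X v2 g r)) \<in> {..<1/2})" . }
        thus ?thesis unfolding topspace_BSC_top by blast
      qed
      moreover have "openin (BSC_top X v1) (\<Union>r\<in>{r. 0 < r \<and> r < a}. {s \<in> topspace (BSC_top X v1). s (ind (lev X v2 g r)) \<in> {..<1/2}})"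
          using opn_lt by (intro openin_Union) blast
      ultimately show "openin (BSC_top X v1) {s \<in> topspace (BSC_top X v1). H X v1 v2 s g < a}" by simp
    qed
  qed
  show ?thesis
    unfolding BSC_top_def continuous_map_in_subtopology
  proof
    show "continuous_map (subtopology (product_topology (\<lambda>_. euclideanreal) (Cbd X v1)) (BSC X v1))
        (product_topology (\<lambda>_. euclideanreal) (Cbd X v2)) (H X v1 v2)"
      unfolding continuous_map_componentwise
    proof
      show "H X v1 v2 ` topspace (subtopology (product_topology (\<lambda>_. euclideanreal) (Cbd X v1)) (BSC X v1))
          \<subseteq> extensional (Cbd X v2)" by (auto simp: H_def Psi_def)
      show "\<forall>k\<in>Cbd X v2. continuous_map (subtopology (product_topology (\<lambda>_. euclideanreal) (Cbd X v1)) (BSC X v1))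
          euclideanreal (\<lambda>x. H X v1 v2 x k)" using comp unfolding BSC_top_def by blast
    qed
    show "H X v1 v2 \<in> topspace (subtopology (product_topology (\<lambda>_. euclideanreal) (Cbd X v1)) (BSC X v1)) \<rightarrow> BSC X v2"
      using H_in[OF _ na1 na2] topspace_BSC_top[of X v1] unfolding BSC_top_def by auto
  qed
qed

lemma H_homeo:
  assumes na1: "nonarch_abs v1" and na2: "nonarch_abs v2"
  shows "homeomorphic_map (BSC_top X v1) (BSC_top X v2) (H X v1 v2)"
proof -
  have "homeomorphic_maps (BSC_top X v1) (BSC_top X v2) (H X v1 v2) (H X v2 v1)"
    unfolding homeomorphic_maps_def topspace_BSC_top
    using H_cont[OF na1 na2] H_cont[OF na2 na1] H_inv[OF _ na1 na2] H_inv[OF _ na2 na1]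
    by blast
  thus ?thesis using homeomorphic_maps_map by blast
qed


lemma eval_BSC:
  assumes na: "nonarch_abs v" and x: "x \<in> topspace X"
  shows "eval_map X v x \<in> BSC X v"
proof -
  note b = na_basic[OF na]
  show ?thesis unfolding BSC_def eval_map_def
  proof (intro CollectI conjI ballI allI)
    show "restrict (\<lambda>f. v (f x)) (Cbd X v) \<in> extensional (Cbd X v)" by simp
    fix f assume f: "f \<in> Cbd X v"
    show "0 \<le> restrict (\<lambda>f. v (f x)) (Cbd X v) f" using f b by simp
    show "restrict (\<lambda>f. v (f x)) (Cbd X v) f \<le> supnorm X v f" using f supnorm_upper[OF f x] by simp
    fix g assume g: "g \<in> Cbd X v"
    show "restrict (\<lambda>f. v (f x)) (Cbd X v) (\<lambda>x. f x + g x)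
        \<le> restrict (\<lambda>f. v (f x)) (Cbd X v) f + restrict (\<lambda>f. v (f x)) (Cbd X v) g"
      using f g add_Cbd[OF na f g] b(7)[of "f x" "g x"] b(5)[of "f x"] b(5)[of "g x"] by simp
    show "restrict (\<lambda>f. v (f x)) (Cbd X v) (\<lambda>x. f x * g x)
        = restrict (\<lambda>f. v (f x)) (Cbd X v) f * restrict (\<lambda>f. v (f x)) (Cbd X v) g"
      using f g mult_Cbd[OF na f g] b(6) by simp
  next
    fix c show "restrict (\<lambda>f. v (f x)) (Cbd X v) (const_fun X c) = v c"
      using const_Cbd[OF na, of X c] x by (simp add: const_fun_def)
  qed
qed

lemma H_eval:
  assumes na1: "nonarch_abs v1" and na2: "nonarch_abs v2" and x: "x \<in> topspace X"
  shows "H X v1 v2 (eval_map X v1 x) = eval_map X v2 x"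
proof -
  note b = na_basic[OF na1]
  have Ph: "Phi X (eval_map X v1 x) = {C \<in> clopens X. x \<in> C}"
    using ind_Cbd[OF na1] b by (auto simp: Phi_def eval_map_def ind_def)
  show ?thesis unfolding H_def Ph
  proof (rule extensionalityI[of _ "Cbd X v2"])
    show "Psi X v2 {C \<in> clopens X. x \<in> C} \<in> extensional (Cbd X v2)" by (simp add: Psi_def)
    show "eval_map X v2 x \<in> extensional (Cbd X v2)" by (simp add: eval_map_def)
    fix g assume g: "g \<in> Cbd X v2"
    have "Pchar X v2 {C \<in> clopens X. x \<in> C} g (v2 (g x))"
      unfolding Pchar_def using lev_clopen[OF na2 g] x na_basic(5)[OF na2]
      by (auto simp: lev_def)
    thus "Psi X v2 {C \<in> clopens X. x \<in> C} g = eval_map X v2 x g"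
      using Psi_eq[OF g] g by (simp add: eval_map_def)
  qed
qed

lemma ultra_Inter:
  assumes u: "ultra X U" and F: "finite F"
  shows "(\<forall>i\<in>F. D i \<in> U) \<Longrightarrow> topspace X \<inter> \<Inter>(D ` F) \<in> U"
  using F
proof (induction F)
  case empty thus ?case using ultraD(2)[OF u] by simp
next
  case (insert i F)
  have "topspace X \<inter> \<Inter>(D ` insert i F) = (topspace X \<inter> \<Inter>(D ` F)) \<inter> D i" by auto
  thus ?case using insert ultraD(4)[OF u] by simp
qed

lemma near:
  assumes s: "s \<in> BSC X v" and na: "nonarch_abs v" and f: "f \<in> Cbd X v" and e: "e > 0"
  shows "\<exists>D\<in>Phi X s. \<forall>x\<in>D. \<bar>v (f x) - s f\<bar> < e"
proof -
  note b = na_basic[OF na]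
  define U where "U = Phi X s"
  have u: "ultra X U" using Phi_ultra[OF s na] by (simp add: U_def)
  have P: "Pchar X v U f (s f)" using BSC_Pchar[OF s na f] by (simp add: U_def)
  have t0: "0 \<le> s f" using P by (simp add: Pchar_def)
  have r1: "s f + e/2 > 0" using t0 e by simp
  have "lev X v f (s f + e/2) \<notin> U"
  proof
    assume "lev X v f (s f + e/2) \<in> U"
    hence "s f + e/2 \<le> s f" using P r1 unfolding Pchar_def by blast
    thus False using e by simp
  qed
  hence D1: "topspace X - lev X v f (s f + e/2) \<in> U" using ultraD(6)[OF u lev_clopen[OF na f r1]] by blast
  define D2 where "D2 = (if s f - e/2 > 0 then lev X v f (s f - e/2) else topspace X)"
  have D2: "D2 \<in> U"
  proof (cases "s f - e/2 > 0")
    case True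
    have "lev X v f (s f - e/2) \<in> U"
    proof (rule ccontr)
      assume "lev X v f (s f - e/2) \<notin> U"
      hence "s f \<le> s f - e/2" using P True unfolding Pchar_def by blast
      thus False using e by simp
    qed
    thus ?thesis using True by (simp add: D2_def)
  qed (use ultraD(2)[OF u] in \<open>simp add: D2_def\<close>)
  have "(topspace X - lev X v f (s f + e/2)) \<inter> D2 \<in> U" using ultraD(4)[OF u D1 D2] .
  moreover have "\<forall>x\<in>(topspace X - lev X v f (s f + e/2)) \<inter> D2. \<bar>v (f x) - s f\<bar> < e"
  proof
    fix x assume x: "x \<in> (topspace X - lev X v f (s f + e/2)) \<inter> D2"
    hence up: "v (f x) < s f + e/2" by (auto simp: lev_def)
    have lo: "s f - e/2 \<le> v (f x)"
    proof (cases "s f - e/2 > 0")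
      case True thus ?thesis using x by (auto simp: D2_def lev_def)
    next
      case False thus ?thesis using b(5)[of "f x"] by linarith
    qed
    show "\<bar>v (f x) - s f\<bar> < e" using up lo e by linarith
  qed
  ultimately show ?thesis unfolding U_def by blast
qed

lemma density:
  assumes s: "s \<in> BSC X v" and na: "nonarch_abs v" and W: "openin (BSC_top X v) W" and sW: "s \<in> W"
  shows "\<exists>x\<in>topspace X. eval_map X v x \<in> W"
proof -
  obtain W' where W': "openin (product_topology (\<lambda>_. euclideanreal) (Cbd X v)) W'" "W = W' \<inter> BSC X v"
    using W unfolding BSC_top_def openin_subtopology by blast
  obtain V where V: "finite {i \<in> Cbd X v. V i \<noteq> topspace euclideanreal}"
    "\<forall>i\<in>Cbd X v. openin euclideanreal (V i)" "s \<in> Pi\<^sub>E (Cbd X v) V" "Pi\<^sub>E (Cbd X v) V \<subseteq> W'"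
    using W'(1) sW W'(2) unfolding openin_product_topology_alt by blast
  define F where "F = {i \<in> Cbd X v. V i \<noteq> UNIV}"
  have F: "finite F" using V(1) by (simp add: F_def)
  have "\<forall>i\<in>F. \<exists>D. D \<in> Phi X s \<and> (\<forall>x\<in>D. v (i x) \<in> V i)"
  proof
    fix i assume i: "i \<in> F"
    hence iC: "i \<in> Cbd X v" by (simp add: F_def)
    have "open (V i)" using V(2) iC by simp
    moreover have "s i \<in> V i" using V(3) iC by auto
    ultimately obtain e where e: "e > 0" "ball (s i) e \<subseteq> V i" using open_contains_ball by blast
    obtain D where D: "D \<in> Phi X s" "\<forall>x\<in>D. \<bar>v (i x) - s i\<bar> < e" using near[OF s na iC e(1)] by blast
    have "\<forall>x\<in>D. v (i x) \<in> V i"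
    proof
      fix x assume "x \<in> D"
      hence "v (i x) \<in> ball (s i) e" using D(2) by (simp add: dist_real_def abs_minus_commute)
      thus "v (i x) \<in> V i" using e(2) by blast
    qed
    thus "\<exists>D. D \<in> Phi X s \<and> (\<forall>x\<in>D. v (i x) \<in> V i)" using D(1) by blast
  qed
  then obtain D where D: "\<forall>i\<in>F. D i \<in> Phi X s \<and> (\<forall>x\<in>D i. v (i x) \<in> V i)" by metis
  have "topspace X \<inter> \<Inter>(D ` F) \<in> Phi X s" using ultra_Inter[OF Phi_ultra[OF s na] F] D by blast
  hence "topspace X \<inter> \<Inter>(D ` F) \<noteq> {}" using ultraD(3)[OF Phi_ultra[OF s na]] by metis
  then obtain x where x: "x \<in> topspace X" "\<forall>i\<in>F. x \<in> D i" by blast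
  have "eval_map X v x \<in> Pi\<^sub>E (Cbd X v) V"
  proof (rule PiE_I)
    fix i assume i: "i \<in> Cbd X v"
    show "eval_map X v x i \<in> V i"
    proof (cases "i \<in> F")
      case True thus ?thesis using D x i by (simp add: eval_map_def)
    next
      case False thus ?thesis using i by (simp add: F_def)
    qed
  next
    fix i assume "i \<notin> Cbd X v" thus "eval_map X v x i = undefined" by (simp add: eval_map_def)
  qed
  hence "eval_map X v x \<in> W" using V(4) W'(2) eval_BSC[OF na x(1)] by blast
  thus ?thesis using x(1) by blast
qed

lemma unique_H:
  assumes na1: "nonarch_abs v1" and na2: "nonarch_abs v2"
    and h: "homeomorphic_map (BSC_top X v1) (BSC_top X v2) h'"
    and c: "\<forall>x\<in>topspace X. h' (eval_map X v1 x) = eval_map X v2 x"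
    and s: "s \<in> BSC X v1"
  shows "h' s = H X v1 v2 s"
proof (rule extensionalityI[of _ "Cbd X v2"])
  have hc: "continuous_map (BSC_top X v1) (BSC_top X v2) h'" using homeomorphic_imp_continuous_map[OF h] .
  have "h' s \<in> BSC X v2" using continuous_map_image_subset_topspace[OF hc] s by (auto simp: topspace_BSC_top)
  thus "h' s \<in> extensional (Cbd X v2)" using BSC_D(1) by blast
  show "H X v1 v2 s \<in> extensional (Cbd X v2)" by (simp add: H_def Psi_def)
  fix g assume g: "g \<in> Cbd X v2"
  show "h' s g = H X v1 v2 s g"
  proof (rule ccontr)
    assume ne: "h' s g \<noteq> H X v1 v2 s g"
    have c1: "continuous_map (BSC_top X v1) euclideanreal (\<lambda>s. h' s g)"
      using continuous_map_compose[OF hc proj_cont[OF g]] by (simp add: o_def)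
    have c2: "continuous_map (BSC_top X v1) euclideanreal (\<lambda>s. H X v1 v2 s g)"
      using continuous_map_compose[OF H_cont[OF na1 na2] proj_cont[OF g]] by (simp add: o_def)
    have cd: "continuous_map (BSC_top X v1) euclideanreal (\<lambda>s. h' s g - H X v1 v2 s g)"
      using continuous_map_diff[OF c1 c2] .
    define W where "W = {s \<in> topspace (BSC_top X v1). h' s g - H X v1 v2 s g \<in> - {0}}"
    have "openin (BSC_top X v1) W" unfolding W_def
      by (rule openin_continuous_map_preimage[OF cd]) (simp add: open_Compl)
    moreover have "s \<in> W" using s ne by (simp add: W_def topspace_BSC_top)
    ultimately obtain x where x: "x \<in> topspace X" "eval_map X v1 x \<in> W" using density[OF s na1] by blast
    have "h' (eval_map X v1 x) g - H X v1 v2 (eval_map X v1 x) g = 0"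
      using c x(1) H_eval[OF na1 na2 x(1)] by simp
    thus False using x(2) by (simp add: W_def)
  qed
qed

lemma restr_eq:
  assumes naE: "nonarch_abs vE" and nak: "nonarch_abs vk"
    and add: "\<forall>a b. \<iota> (a + b) = \<iota> a + \<iota> b" and vi: "\<forall>a. vE (\<iota> a) = vk a"
    and s: "s \<in> BSC X vE"
  shows "restr_map X vk \<iota> s = H X vE vk s"
proof (rule extensionalityI[of _ "Cbd X vk"])
  show "restr_map X vk \<iota> s \<in> extensional (Cbd X vk)" by (simp add: restr_map_def)
  show "H X vE vk s \<in> extensional (Cbd X vk)" by (simp add: H_def Psi_def)
  have i0: "\<iota> 0 = 0" using add[rule_format, of 0 0] by (metis add.right_neutral add_left_cancel)
  have idiff: "\<iota> (a - b) = \<iota> a - \<iota> b" for a b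
    using add[rule_format, of "a - b" b] by (simp add: eq_diff_eq)
  fix f assume f: "f \<in> Cbd X vk"
  have iof: "\<iota> \<circ> f \<in> Cbd X vE"
  proof -
    obtain B where B: "\<forall>x\<in>topspace X. vk (f x) \<le> B" using CbdD(3)[OF f] by blast
    show ?thesis
    proof (rule CbdI[where B=B])
      show "\<And>x. x \<notin> topspace X \<Longrightarrow> (\<iota> \<circ> f) x = 0" using CbdD(1)[OF f] i0 by simp
      show "\<And>x. x \<in> topspace X \<Longrightarrow> vE ((\<iota> \<circ> f) x) \<le> B" using B vi by simp
      fix x and e :: real assume "x \<in> topspace X" "e > 0"
      thus "\<exists>U. openin X U \<and> x \<in> U \<and> (\<forall>y\<in>U. vE ((\<iota> \<circ> f) y - (\<iota> \<circ> f) x) < e)"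
        using CbdD(2)[OF f] by (simp add: idiff[symmetric] vi)
    qed
  qed
  have L: "lev X vE (\<iota> \<circ> f) r = lev X vk f r" for r by (simp add: lev_def vi)
  have "Pchar X vk (Phi X s) f (s (\<iota> \<circ> f))"
    using BSC_Pchar[OF s naE iof] unfolding Pchar_def L .
  hence "H X vE vk s f = s (\<iota> \<circ> f)" unfolding H_def by (rule Psi_eq[OF f])
  thus "restr_map X vk \<iota> s f = H X vE vk s f" using f by (simp add: restr_map_def)
qed

theorem mainTheorem17:
  fixes X :: "'a topology"
    and vK :: "'K::field \<Rightarrow> real" and vL :: "'L::field \<Rightarrow> real"
  assumes "complete_valued_field vK" and "complete_valued_field vL"
  shows "(\<exists>h. homeomorphic_map (BSC_top X vK) (BSC_top X vL) h \<and>
            (\<forall>x\<in>topspace X. h (eval_map X vK x) = eval_map X vL x) \<and>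
            (\<forall>h'. homeomorphic_map (BSC_top X vK) (BSC_top X vL) h' \<and>
                  (\<forall>x\<in>topspace X. h' (eval_map X vK x) = eval_map X vL x)
               \<longrightarrow> (\<forall>s\<in>BSC X vK. h' s = h s)))
       \<and> (\<forall>(vE :: 'E::field \<Rightarrow> real) (vk :: 'k::field \<Rightarrow> real) (\<iota> :: 'k \<Rightarrow> 'E).
            complete_valued_field vE \<and> complete_valued_field vk \<and>
            (\<forall>a b. \<iota> (a + b) = \<iota> a + \<iota> b) \<and> (\<forall>a b. \<iota> (a * b) = \<iota> a * \<iota> b) \<and>
            \<iota> 1 = 1 \<and> (\<forall>a. vE (\<iota> a) = vk a)
          \<longrightarrow> homeomorphic_map (BSC_top X vE) (BSC_top X vk) (restr_map X vk \<iota>))"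
proof -
  have naK: "nonarch_abs vK" and naL: "nonarch_abs vL"
    using assms by (auto simp: complete_valued_field_def)
  have P1a: "homeomorphic_map (BSC_top X vK) (BSC_top X vL) (H X vK vL)" by (rule H_homeo[OF naK naL])
  have P1b: "\<forall>x\<in>topspace X. H X vK vL (eval_map X vK x) = eval_map X vL x"
    by (intro ballI H_eval[OF naK naL])
  have P1c: "\<forall>h'. homeomorphic_map (BSC_top X vK) (BSC_top X vL) h' \<and>
                  (\<forall>x\<in>topspace X. h' (eval_map X vK x) = eval_map X vL x)
               \<longrightarrow> (\<forall>s\<in>BSC X vK. h' s = H X vK vL s)"
  proof (intro allI impI ballI)
    fix h' s assume "homeomorphic_map (BSC_top X vK) (BSC_top X vL) h' \<and>
                  (\<forall>x\<in>topspace X. h' (eval_map X vK x) = eval_map X vL x)" and s: "s \<in> BSC X vK"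
    thus "h' s = H X vK vL s" using unique_H[OF naK naL, where h'=h' and s=s] s by blast
  qed
  show ?thesis
  proof (intro conjI allI impI)
    show "\<exists>h. homeomorphic_map (BSC_top X vK) (BSC_top X vL) h \<and>
            (\<forall>x\<in>topspace X. h (eval_map X vK x) = eval_map X vL x) \<and>
            (\<forall>h'. homeomorphic_map (BSC_top X vK) (BSC_top X vL) h' \<and>
                  (\<forall>x\<in>topspace X. h' (eval_map X vK x) = eval_map X vL x)
               \<longrightarrow> (\<forall>s\<in>BSC X vK. h' s = h s))"
      using P1a P1b P1c by (intro exI[of _ "H X vK vL"]) (simp only: simp_thms)
  next
    fix vE :: "'E::field \<Rightarrow> real" and vk :: "'k::field \<Rightarrow> real" and \<iota> :: "'k \<Rightarrow> 'E"
    assume A: "complete_valued_field vE \<and> complete_valued_field vk \<and>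
            (\<forall>a b. \<iota> (a + b) = \<iota> a + \<iota> b) \<and> (\<forall>a b. \<iota> (a * b) = \<iota> a * \<iota> b) \<and>
            \<iota> 1 = 1 \<and> (\<forall>a. vE (\<iota> a) = vk a)"
    have naE: "nonarch_abs vE" and nak: "nonarch_abs vk"
      using A by (auto simp: complete_valued_field_def)
    have A1: "\<forall>a b. \<iota> (a + b) = \<iota> a + \<iota> b" and A2: "\<forall>a. vE (\<iota> a) = vk a" using A by blast+
    show "homeomorphic_map (BSC_top X vE) (BSC_top X vk) (restr_map X vk \<iota>)"
    proof (rule homeomorphic_map_eq[OF H_homeo[OF naE nak]])
      fix s assume "s \<in> topspace (BSC_top X vE)"
      hence s: "s \<in> BSC X vE" by (simp only: topspace_BSC_top)
      show "H X vE vk s = restr_map X vk \<iota> s" using restr_eq[OF naE nak A1 A2 s] by (rule sym)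
    qed
  qed
qed

end
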